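(* Let $(S,\Delta,\mathbb{P})$ be a probability space, $(U,d)$ a separable metric space, $\mathfrak{X}$ the set of $U$-valued random variables on $S$, and suppose $\mathfrak{X}^0$ has at least two distinct elements. Let $\mathcal{I}$ be an admissible ideal on $\mathbb{N}$. Then $\mathcal{I}$ is maximal if and only if $\mathcal{I}^{\mathbb{P}}\text{-}LIM^r\underline{X}=\Gamma^{r^s}_{\underline{X}}(\mathcal{I}^{\mathbb{P}})$ for every $r\geq 0$ and every sequence $\underline{X}=\{X_n\}$ in $\mathfrak{X}$.
   Context: $\mathfrak{X}^0$ is the set of equivalence classes of $\mathfrak{X}$ under almost sure equality. An ideal on $\mathbb{N}$ is a family $\mathcal{I}\subseteq\mathcal{P}(\mathbb{N})$ with $\varnothing\in\mathcal{I}$, closed under finite unions and under subsets; it is admissible if $\mathbb{N}\notin\mathcal{I}$ and $\{t\}\in\mathcal{I}$ for every $t\in\mathbb{N}$; it is maximal if $\mathbb{N}\notin\mathcal{I}$ and there is no ideal $\mathcal{J}$ with $\mathcal{I}\subsetneq\mathcal{J}$ and $\mathbb{N}\notin\mathcal{J}$. $\mathcal{I}^{\mathbb{P}}\text{-}LIM^r\underline{X}$ is the set of $X_*\in\mathfrak{X}$ with $\{n:\mathbb{P}(d(X_n,X_* )>r+\varepsilon)>\delta\}\in\mathcal{I}$ for all $\varepsilon,\delta>0$; $\Gamma^{r^s}_{\underline{X}}(\mathcal{I}^{\mathbb{P}})$ is the set of $Y\in\mathfrak{X}$ with $\{n:\mathbb{P}(d(X_n,Y)<r+\varepsilon)>1-\delta\}\notin\mathcal{I}$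 for all $\varepsilon,\delta>0$. *)

theory Defs
  imports "HOL-Probability.Probability"
begin

definition ideal_on_nat :: "nat set set \<Rightarrow> bool" where
  "ideal_on_nat I \<longleftrightarrow> {} \<in> I \<and> (\<forall>A\<in>I. \<forall>B\<in>I. A \<union> B \<in> I) \<and> (\<forall>A\<in>I. \<forall>B. B \<subseteq> A \<longrightarrow> B \<in> I)"

definition admissible_ideal :: "nat set set \<Rightarrow> bool" where
  "admissible_ideal I \<longleftrightarrow> ideal_on_nat I \<and> UNIV \<notin> I \<and> (\<forall>t. {t} \<in> I)"

definition maximal_ideal_on_nat :: "nat set set \<Rightarrow> bool" where
  "maximal_ideal_on_nat I \<longleftrightarrow> ideal_on_nat I \<and> UNIV \<notin> I \<and>
     \<not> (\<exists>J. ideal_on_nat J \<and> I \<subset> J \<and> UNIV \<notin> J)"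

definition I_prob_LIM ::
  "'a measure \<Rightarrow> nat set set \<Rightarrow> real \<Rightarrow> (nat \<Rightarrow> 'a \<Rightarrow> 'b::metric_space) \<Rightarrow> ('a \<Rightarrow> 'b) set" where
  "I_prob_LIM M I r X = {Z \<in> borel_measurable M. \<forall>\<epsilon>>0. \<forall>\<delta>>0.
      {n. measure M {s \<in> space M. dist (X n s) (Z s) > r + \<epsilon>} > \<delta>} \<in> I}"

definition I_prob_Gamma ::
  "'a measure \<Rightarrow> nat set set \<Rightarrow> real \<Rightarrow> (nat \<Rightarrow> 'a \<Rightarrow> 'b::metric_space) \<Rightarrow> ('a \<Rightarrow> 'b) set" where
  "I_prob_Gamma M I r X = {Y \<in> borel_measurable M. \<forall>\<epsilon>>0. \<forall>\<delta>>0.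
      {n. measure M {s \<in> space M. dist (X n s) (Y s) < r + \<epsilon>} > 1 - \<delta>} \<notin> I}"

end

theory Submission
  imports Defs
begin

lemma pred_in:
  assumes f: "f \<in> borel_measurable M" and B: "open B"
  shows "Measurable.pred M (\<lambda>s. f s \<in> B)"
proof -
  have "{s \<in> space M. f s \<in> B} = f -` B \<inter> space M" by auto
  then show ?thesis unfolding pred_def using measurable_sets[OF f borel_open[OF B]] by simp
qed

lemma dist_meas:
  fixes X Y :: "'a \<Rightarrow> 'b::metric_space"
  assumes sep: "separable_space (euclidean :: 'b topology)"
    and X: "X \<in> borel_measurable M" and Y: "Y \<in> borel_measurable M"
  shows "(\<lambda>s. dist (X s) (Y s)) \<in> borel_measurable M"
proof -
  obtain C :: "'b set" where C: "countable C" "closure C = UNIV"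
    using sep unfolding separable_space_def by auto
  have dense: "\<exists>d\<in>C. dist x d < e" if ep: "e > 0" for x e
  proof -
    have "x \<in> closure C" using C by simp
    then obtain d where "d \<in> C" "dist d x < e" using ep closure_approachable by metis
    then show ?thesis by (auto simp: dist_commute)
  qed
  have key: "dist x y < c \<longleftrightarrow> (\<exists>d\<in>C. \<exists>a\<in>\<rat>. \<exists>b\<in>\<rat>. a + b < c \<and> dist d x < a \<and> dist d y < b)"
    for x y :: 'b and c :: real
  proof
    assume h: "dist x y < c"
    define t where "t = dist x y"
    define e where "e = (c - t) / 4"
    have e: "e > 0" using h by (simp add: e_def t_def)
    obtain d where d: "d \<in> C" "dist x d < e" using dense[OF e] by blast
    have yd: "dist y d < t + e" using dist_triangle[of y d x] d(2) by (simp add: t_def dist_commute)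
    obtain a where a: "a \<in> \<rat>" "dist x d < a" "a < e" using Rats_dense_in_real[OF d(2)] by blast
    obtain b where b: "b \<in> \<rat>" "dist y d < b" "b < t + e" using Rats_dense_in_real[OF yd] by blast
    have "a + b < c" using a b e unfolding e_def by (simp add: field_simps)
    then show "\<exists>d\<in>C. \<exists>a\<in>\<rat>. \<exists>b\<in>\<rat>. a + b < c \<and> dist d x < a \<and> dist d y < b"
      using a b d by (auto simp: dist_commute)
  next
    assume "\<exists>d\<in>C. \<exists>a\<in>\<rat>. \<exists>b\<in>\<rat>. a + b < c \<and> dist d x < a \<and> dist d y < b"
    then obtain d a b where "a + b < c" "dist d x < a" "dist d y < b" by blast
    then show "dist x y < c" using dist_triangle[of x y d] by (simp add: dist_commute)
  qed
  show ?thesis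
  proof (rule borel_measurable_iff_less[THEN iffD2], intro allI)
    fix c :: real
    have "{w \<in> space M. \<exists>d\<in>C. \<exists>a\<in>\<rat>. \<exists>b\<in>\<rat>. a + b < c \<and> dist d (X w) < a \<and> dist d (Y w) < b} \<in> sets M"
    proof (rule sets.sets_Collect_countable_Ex'[OF _ C(1)])
      fix d assume "d \<in> C"
      show "{w \<in> space M. \<exists>a\<in>\<rat>. \<exists>b\<in>\<rat>. a + b < c \<and> dist d (X w) < a \<and> dist d (Y w) < b} \<in> sets M"
      proof (rule sets.sets_Collect_countable_Ex'[OF _ countable_rat])
        fix a :: real assume "a \<in> \<rat>"
        show "{w \<in> space M. \<exists>b\<in>\<rat>. a + b < c \<and> dist d (X w) < a \<and> dist d (Y w) < b} \<in> sets M"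
        proof (rule sets.sets_Collect_countable_Ex'[OF _ countable_rat])
          fix b :: real assume "b \<in> \<rat>"
          have "Measurable.pred M (\<lambda>s. a + b < c \<and> X s \<in> ball d a \<and> Y s \<in> ball d b)"
            by (intro pred_intros_logic pred_in[OF X] pred_in[OF Y] open_ball) simp
          then show "{w \<in> space M. a + b < c \<and> dist d (X w) < a \<and> dist d (Y w) < b} \<in> sets M"
            unfolding pred_def mem_ball .
        qed
      qed
    qed
    moreover have eq: "\<And>w. dist (X w) (Y w) < c \<longleftrightarrow> (\<exists>d\<in>C. \<exists>a\<in>\<rat>. \<exists>b\<in>\<rat>. a + b < c \<and> dist d (X w) < a \<and> dist d (Y w) < b)"
      by (rule key)
    ultimately show "{w \<in> space M. dist (X w) (Y w) < c} \<in> sets M"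
      by (simp only: eq)
  qed
qed

lemma max_iff:
  assumes "admissible_ideal I"
  shows "maximal_ideal_on_nat I \<longleftrightarrow> (\<forall>A. A \<in> I \<or> - A \<in> I)"
proof
  assume m: "maximal_ideal_on_nat I"
  show "\<forall>A. A \<in> I \<or> - A \<in> I"
  proof (rule ccontr)
    assume "\<not> (\<forall>A. A \<in> I \<or> - A \<in> I)"
    then obtain A where A: "A \<notin> I" "- A \<notin> I" by blast
    define J where "J = {B. \<exists>C\<in>I. B \<subseteq> C \<union> A}"
    have id: "ideal_on_nat I" using assms by (simp add: admissible_ideal_def)
    have e: "{} \<in> I" and un: "\<And>X Y. X \<in> I \<Longrightarrow> Y \<in> I \<Longrightarrow> X \<union> Y \<in> I"
      and sub: "\<And>X Y. X \<in> I \<Longrightarrow> Y \<subseteq> X \<Longrightarrow> Y \<in> I"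
      using id unfolding ideal_on_nat_def by blast+
    have "ideal_on_nat J" unfolding ideal_on_nat_def J_def
    proof (intro conjI ballI allI impI)
      show "{} \<in> {B. \<exists>C\<in>I. B \<subseteq> C \<union> A}" using e by blast
    next
      fix X Y assume "X \<in> {B. \<exists>C\<in>I. B \<subseteq> C \<union> A}" "Y \<in> {B. \<exists>C\<in>I. B \<subseteq> C \<union> A}"
      then obtain C1 C2 where "C1 \<in> I" "C2 \<in> I" "X \<subseteq> C1 \<union> A" "Y \<subseteq> C2 \<union> A" by blast
      then show "X \<union> Y \<in> {B. \<exists>C\<in>I. B \<subseteq> C \<union> A}" using un[of C1 C2] by blast
    next
      fix X Y assume "X \<in> {B. \<exists>C\<in>I. B \<subseteq> C \<union> A}" "Y \<subseteq> X"
      then show "Y \<in> {B. \<exists>C\<in>I. B \<subseteq> C \<union> A}" by blast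
    qed
    moreover have "I \<subset> J"
    proof -
      have "I \<subseteq> J" unfolding J_def by blast
      moreover have "A \<in> J" unfolding J_def using e by blast
      ultimately show ?thesis using A by blast
    qed
    moreover have "UNIV \<notin> J"
    proof
      assume "UNIV \<in> J"
      then obtain C where "C \<in> I" "UNIV \<subseteq> C \<union> A" unfolding J_def by blast
      then have "- A \<subseteq> C" by blast
      then show False using sub \<open>C \<in> I\<close> A by blast
    qed
    ultimately show False using m unfolding maximal_ideal_on_nat_def by blast
  qed
next
  assume d: "\<forall>A. A \<in> I \<or> - A \<in> I"
  have id: "ideal_on_nat I" and nU: "UNIV \<notin> I" using assms by (auto simp: admissible_ideal_def)
  have "\<not> (\<exists>J. ideal_on_nat J \<and> I \<subset> J \<and> UNIV \<notin> J)"
  proof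
    assume "\<exists>J. ideal_on_nat J \<and> I \<subset> J \<and> UNIV \<notin> J"
    then obtain J where J: "ideal_on_nat J" "I \<subset> J" "UNIV \<notin> J" by blast
    then obtain A where "A \<in> J" "A \<notin> I" by blast
    then have "- A \<in> J" using d J(2) by blast
    then have "A \<union> - A \<in> J" using \<open>A \<in> J\<close> J(1) unfolding ideal_on_nat_def by blast
    then show False using J(3) by simp
  qed
  then show "maximal_ideal_on_nat I" using id nU unfolding maximal_ideal_on_nat_def by blast
qed

theorem theorem3p15:
  fixes M :: "'a measure" and I :: "nat set set"
  assumes "prob_space M"
    and "separable_space (euclidean :: 'b::metric_space topology)"
    and "\<exists>X Y :: 'a \<Rightarrow> 'b. X \<in> borel_measurable M \<and> Y \<in> borel_measurable M \<and>
           \<not> (AE s in M. X s = Y s)"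
    and "admissible_ideal I"
  shows "maximal_ideal_on_nat I \<longleftrightarrow>
    (\<forall>r::real. r \<ge> 0 \<longrightarrow> (\<forall>X :: nat \<Rightarrow> 'a \<Rightarrow> 'b. (\<forall>n. X n \<in> borel_measurable M) \<longrightarrow>
        I_prob_LIM M I r X = I_prob_Gamma M I r X))"
proof -
  interpret P: prob_space M by fact
  have dm: "(\<lambda>s. dist (X s) (Y s)) \<in> borel_measurable M"
    if "X \<in> borel_measurable M" "Y \<in> borel_measurable M" for X Y :: "'a \<Rightarrow> 'b"
    using dist_meas[OF assms(2) that] .
  have lt: "{s \<in> space M. dist (X s) (Y s) < t} \<in> sets M"
    if "X \<in> borel_measurable M" "Y \<in> borel_measurable M" for X Y :: "'a \<Rightarrow> 'b" and t
    using borel_measurable_iff_less[THEN iffD1, OF dm[OF that]] by blast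
  have gt: "{s \<in> space M. dist (X s) (Y s) > t} \<in> sets M"
    if "X \<in> borel_measurable M" "Y \<in> borel_measurable M" for X Y :: "'a \<Rightarrow> 'b" and t
    using borel_measurable_iff_greater[THEN iffD1, OF dm[OF that]] by blast
  have id: "ideal_on_nat I" and nU: "UNIV \<notin> I" using assms(4) by (auto simp: admissible_ideal_def)
  have un: "\<And>X Y. X \<in> I \<Longrightarrow> Y \<in> I \<Longrightarrow> X \<union> Y \<in> I"
    and sub: "\<And>X Y. X \<in> I \<Longrightarrow> Y \<subseteq> X \<Longrightarrow> Y \<in> I"
    using id unfolding ideal_on_nat_def by blast+
  show ?thesis
  proof
    assume "maximal_ideal_on_nat I"
    then have dich: "\<And>A. A \<in> I \<or> - A \<in> I" using max_iff[OF assms(4)] by blast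
    show "\<forall>r::real. r \<ge> 0 \<longrightarrow> (\<forall>X :: nat \<Rightarrow> 'a \<Rightarrow> 'b. (\<forall>n. X n \<in> borel_measurable M) \<longrightarrow>
        I_prob_LIM M I r X = I_prob_Gamma M I r X)"
    proof (intro allI impI)
      fix r :: real and X :: "nat \<Rightarrow> 'a \<Rightarrow> 'b"
      assume r: "r \<ge> 0" and Xm: "\<forall>n. X n \<in> borel_measurable M"
      show "I_prob_LIM M I r X = I_prob_Gamma M I r X"
      proof (intro equalityI subsetI)
        fix Z assume "Z \<in> I_prob_LIM M I r X"
        then have Zm: "Z \<in> borel_measurable M" and
          Zl: "\<And>e d. e > 0 \<Longrightarrow> d > 0 \<Longrightarrow>
             {n. measure M {s \<in> space M. dist (X n s) (Z s) > r + e} > d} \<in> I"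
          unfolding I_prob_LIM_def by auto
        show "Z \<in> I_prob_Gamma M I r X"
          unfolding I_prob_Gamma_def
        proof (intro CollectI conjI Zm allI impI)
          fix e d :: real assume e: "e > 0" and d: "d > 0"
          define S where "S = {n. measure M {s \<in> space M. dist (X n s) (Z s) < r + e} > 1 - d}"
          define T where "T = {n. measure M {s \<in> space M. dist (X n s) (Z s) > r + e/2} > d/2}"
          have TI: "T \<in> I" unfolding T_def using Zl[of "e/2" "d/2"] e d by simp
          have "- S \<subseteq> T"
          proof
            fix n assume "n \<in> - S"
            then have h: "measure M {s \<in> space M. dist (X n s) (Z s) < r + e} \<le> 1 - d"
              unfolding S_def by simp
            have c: "measure M (space M - {s \<in> space M. dist (X n s) (Z s) < r + e}) =
                1 - measure M {s \<in> space M. dist (X n s) (Z s) < r + e}"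
              using P.prob_compl[OF lt[OF Xm[rule_format] Zm]] .
            have "space M - {s \<in> space M. dist (X n s) (Z s) < r + e} \<subseteq>
                {s \<in> space M. dist (X n s) (Z s) > r + e/2}" using e by auto
            then have "measure M (space M - {s \<in> space M. dist (X n s) (Z s) < r + e}) \<le>
                measure M {s \<in> space M. dist (X n s) (Z s) > r + e/2}"
              by (intro P.finite_measure_mono gt[OF Xm[rule_format] Zm])
            then show "n \<in> T" unfolding T_def using c h d by simp
          qed
          show "S \<notin> I"
          proof
            assume "S \<in> I"
            then have "S \<union> T \<in> I" using un TI by blast
            moreover have "S \<union> T = UNIV" using \<open>- S \<subseteq> T\<close> by blast
            ultimately show False using nU by simp
          qed
        qed
      next
        fix Z assume "Z \<in> I_prob_Gamma M I r X"
        then have Zm: "Z \<in> borel_measurable M" and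
          Zg: "\<And>e d. e > 0 \<Longrightarrow> d > 0 \<Longrightarrow>
             {n. measure M {s \<in> space M. dist (X n s) (Z s) < r + e} > 1 - d} \<notin> I"
          unfolding I_prob_Gamma_def by auto
        show "Z \<in> I_prob_LIM M I r X"
          unfolding I_prob_LIM_def
        proof (intro CollectI conjI Zm allI impI)
          fix e d :: real assume e: "e > 0" and d: "d > 0"
          define S where "S = {n. measure M {s \<in> space M. dist (X n s) (Z s) < r + e} > 1 - d}"
          have SI: "- S \<in> I" using dich[of S] Zg[OF e d] unfolding S_def by blast
          have "{n. measure M {s \<in> space M. dist (X n s) (Z s) > r + e} > d} \<subseteq> - S"
          proof
            fix n assume "n \<in> {n. measure M {s \<in> space M. dist (X n s) (Z s) > r + e} > d}"
            then have h: "measure M {s \<in> space M. dist (X n s) (Z s) > r + e} > d" by simp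
            have c: "measure M (space M - {s \<in> space M. dist (X n s) (Z s) < r + e}) =
                1 - measure M {s \<in> space M. dist (X n s) (Z s) < r + e}"
              using P.prob_compl[OF lt[OF Xm[rule_format] Zm]] .
            have "{s \<in> space M. dist (X n s) (Z s) > r + e} \<subseteq>
                space M - {s \<in> space M. dist (X n s) (Z s) < r + e}" by auto
            then have "measure M {s \<in> space M. dist (X n s) (Z s) > r + e} \<le>
                measure M (space M - {s \<in> space M. dist (X n s) (Z s) < r + e})"
              by (intro P.finite_measure_mono) (auto intro: lt[OF Xm[rule_format] Zm])
            then show "n \<in> - S" unfolding S_def using c h by simp
          qed
          then show "{n. measure M {s \<in> space M. dist (X n s) (Z s) > r + e} > d} \<in> I"
            using sub[OF SI] by blast
        qed
      qed
    qed
  next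
    assume R: "\<forall>r::real. r \<ge> 0 \<longrightarrow> (\<forall>X :: nat \<Rightarrow> 'a \<Rightarrow> 'b. (\<forall>n. X n \<in> borel_measurable M) \<longrightarrow>
        I_prob_LIM M I r X = I_prob_Gamma M I r X)"
    show "maximal_ideal_on_nat I"
    proof (rule ccontr)
      assume "\<not> maximal_ideal_on_nat I"
      then obtain A where A: "A \<notin> I" "- A \<notin> I" using max_iff[OF assms(4)] by blast
      obtain X0 Y0 :: "'a \<Rightarrow> 'b" where X0: "X0 \<in> borel_measurable M" and Y0: "Y0 \<in> borel_measurable M"
        and nAE: "\<not> (AE s in M. X0 s = Y0 s)" using assms(3) by blast
      define N where "N = (\<lambda>k::nat. {s \<in> space M. dist (Y0 s) (X0 s) > inverse (real (Suc k))})"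
      have Nm: "N k \<in> sets M" for k unfolding N_def by (rule gt[OF Y0 X0])
      have "\<exists>k. measure M (N k) > 0"
      proof (rule ccontr)
        assume "\<not> (\<exists>k. measure M (N k) > 0)"
        then have "measure M (N k) = 0" for k using measure_nonneg[of M "N k"] by (meson not_less order_antisym)
        then have "N k \<in> null_sets M" for k using Nm[of k] by (simp add: P.emeasure_eq_measure null_sets_def)
        then have "(\<Union>k. N k) \<in> null_sets M" by (rule null_sets_UN)
        moreover have "{s \<in> space M. \<not> (X0 s = Y0 s)} \<subseteq> (\<Union>k. N k)"
        proof
          fix s assume "s \<in> {s \<in> space M. \<not> (X0 s = Y0 s)}"
          then have s: "s \<in> space M" "dist (Y0 s) (X0 s) > 0" by auto
          then obtain k where "inverse (real (Suc k)) < dist (Y0 s) (X0 s)" using reals_Archimedean by blast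
          then show "s \<in> (\<Union>k. N k)" using s unfolding N_def by blast
        qed
        ultimately have "AE s in M. X0 s = Y0 s" by (rule AE_I')
        then show False using nAE by simp
      qed
      then obtain k where k: "measure M (N k) > 0" by blast
      define Xs where "Xs = (\<lambda>n. if n \<in> A then X0 else Y0)"
      have Xsm: "\<forall>n. Xs n \<in> borel_measurable M" unfolding Xs_def using X0 Y0 by simp
      have inG: "X0 \<in> I_prob_Gamma M I 0 Xs"
        unfolding I_prob_Gamma_def
      proof (intro CollectI conjI X0 allI impI)
        fix e d :: real assume e: "e > 0" and d: "d > 0"
        have "A \<subseteq> {n. measure M {s \<in> space M. dist (Xs n s) (X0 s) < 0 + e} > 1 - d}"
        proof
          fix n assume "n \<in> A"
          then have "{s \<in> space M. dist (Xs n s) (X0 s) < 0 + e} = space M" using e unfolding Xs_def by auto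
          then show "n \<in> {n. measure M {s \<in> space M. dist (Xs n s) (X0 s) < 0 + e} > 1 - d}"
            using d P.prob_space by simp
        qed
        then show "{n. measure M {s \<in> space M. dist (Xs n s) (X0 s) < 0 + e} > 1 - d} \<notin> I"
          using sub A(1) by blast
      qed
      have notL: "X0 \<notin> I_prob_LIM M I 0 Xs"
      proof
        assume L: "X0 \<in> I_prob_LIM M I 0 Xs"
        have "{n. measure M {s \<in> space M. dist (Xs n s) (X0 s) > 0 + inverse (real (Suc k))} > measure M (N k) / 2} \<in> I"
        proof -
          from L have "\<forall>e>0. \<forall>d>0. {n. measure M {s \<in> space M. dist (Xs n s) (X0 s) > 0 + e} > d} \<in> I"
            unfolding I_prob_LIM_def by blast
          moreover have "inverse (real (Suc k)) > 0" "measure M (N k) / 2 > 0" using k by auto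
          ultimately show ?thesis by blast
        qed
        moreover have "- A \<subseteq> {n. measure M {s \<in> space M. dist (Xs n s) (X0 s) > 0 + inverse (real (Suc k))} > measure M (N k) / 2}"
        proof
          fix n assume "n \<in> - A"
          then have "{s \<in> space M. dist (Xs n s) (X0 s) > 0 + inverse (real (Suc k))} = N k"
            unfolding Xs_def N_def by auto
          then show "n \<in> {n. measure M {s \<in> space M. dist (Xs n s) (X0 s) > 0 + inverse (real (Suc k))} > measure M (N k) / 2}"
            using k by simp
        qed
        ultimately show False using sub A(2) by blast
      qed
      have "I_prob_LIM M I 0 Xs = I_prob_Gamma M I 0 Xs" using R Xsm by simp
      then show False using inG notL by simp
    qed
  qed
qed

end
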